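(* Let $F,G\in\mathcal{D}_0$ with $F \leftrightarrow (A,(x_j,p_j)_{j\in A})$ and $G\leftrightarrow (B,(y_j,q_j)_{j\in B})$. If $F\le_{\wedge\text{-disc}} G$, then $F\le_{wd} G$, i.e. $Q_X(\varepsilon)\ge Q_Y(\varepsilon)$ for all $\varepsilon>0$, where $X\sim F$, $Y\sim G$.
   Context: For a real random variable $X$, its Lévy concentration function is $Q_X(\varepsilon)=\sup_{x_0\in\mathbb{R}}\Pr\{X\in[x_0,x_0+\varepsilon]\}$, $\varepsilon>0$. For random variables $X,Y$ (or their distribution functions), write $X\le_{wd}Y$ if $Q_X(\varepsilon)\ge Q_Y(\varepsilon)$ for all $\varepsilon>0$. $\mathcal{D}_0$ is the set of discrete distributions $F$ on $\mathbb{R}$ whose support is order-isomorphic to a subset of $\mathbb{Z}$ with at least two elements. For $F\in\mathcal{D}_0$ there is a unique index set $A\in\{\mathbb{Z},\mathbb{N},-\mathbb{N}\}\cup\{\{1,\dots,n\}:n\ge 2\}$ order-isomorphic to $\operatorname{supp}(F)$ and a unique sequence $(x_j,p_j)_{j\in A}$ with $x_i<x_j$ for $i<j$, $p_j>0$, $\sum_{j\in A}p_j=1$, $\Pr(X=x_j)=p_j$ for $X\sim F$, where in the case $A=\mathbb{Z}$ the indexing is normalized by $\inf\{j\in\mathbb{Z}:\sum_{i\le j}p_i\ge 1/2\}=0$; this is written $F\leftrightarrow(A,(x_j,p_j)_{j\in A})$. Conventions: $x_a=-\infty$, $F(x_a)=0$ for $a<\min A$, and $x_a=+\infty$, $F(x_a)=1$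 for $a>\max A$ (when these exist); similarly for $G$. Let $A^\circ=A\setminus\{\min A\}$ (and $A^\circ=A$ if $A$ has no minimum), similarly $B^\circ$. For $a\in A,b\in B$ write $a\sim b$ iff $(F(x_{a-1}),F(x_a))\cap(G(y_{b-1}),G(y_b))\neq\emptyset$. For $a\in A^\circ,b\in B^\circ$ write $a\sim_\wedge b$ iff $a\sim b$ and $a-1\sim b-1$. Define $F\le_{\wedge\text{-disc}}G$ ("$G$ is at least as $\wedge$-discretely dispersed as $F$") iff (i) $q_b\le p_a$ for all $(a,b)\in A\times B$ with $a\sim b$, and (ii) $x_a-x_{a-1}\le y_b-y_{b-1}$ for all $(a,b)\in A^\circ\times B^\circ$ with $a\sim_\wedge b$. *)

theory Defs
  imports "HOL-Probability.Probability"
begin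

definition conc :: "real pmf \<Rightarrow> real \<Rightarrow> real" where
  "conc F eps = (SUP x0. measure_pmf.prob F {x0..x0 + eps})"

definition wd_le :: "real pmf \<Rightarrow> real pmf \<Rightarrow> bool" where
  "wd_le F G \<longleftrightarrow> (\<forall>eps>0. conc F eps \<ge> conc G eps)"

definition admissible_index :: "int set \<Rightarrow> bool" where
  "admissible_index A \<longleftrightarrow> A = UNIV \<or> A = {1..} \<or> A = {..-1} \<or> (\<exists>n\<ge>2. A = {1..n})"

text \<open>F corresponds to (A, (x_j, p_j)_{j in A}); this also encodes F \<in> D_0.\<close>
definition represents :: "real pmf \<Rightarrow> int set \<Rightarrow> (int \<Rightarrow> real) \<Rightarrow> (int \<Rightarrow> real) \<Rightarrow> bool" where
  "represents F A x p \<longleftrightarrow>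
     admissible_index A \<and>
     strict_mono_on A x \<and>
     (\<forall>j\<in>A. p j > 0) \<and>
     (p has_sum 1) A \<and>
     (\<forall>j\<in>A. pmf F (x j) = p j) \<and>
     set_pmf F = x ` A \<and>
     (A = UNIV \<longrightarrow> measure_pmf.prob F {..x 0} \<ge> 1/2 \<and> measure_pmf.prob F {..x (-1)} < 1/2)"

definition cdf_at :: "real pmf \<Rightarrow> int set \<Rightarrow> (int \<Rightarrow> real) \<Rightarrow> int \<Rightarrow> real" where
  "cdf_at F A x a =
     (if a \<in> A then measure_pmf.prob F {..x a}
      else if (\<forall>i\<in>A. a < i) then 0 else 1)"

definition circ :: "int set \<Rightarrow> int set" where
  "circ A = {a \<in> A. \<not> (\<forall>i\<in>A. a \<le> i)}"

definition idx_sim ::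
  "real pmf \<Rightarrow> int set \<Rightarrow> (int \<Rightarrow> real) \<Rightarrow> real pmf \<Rightarrow> int set \<Rightarrow> (int \<Rightarrow> real) \<Rightarrow> int \<Rightarrow> int \<Rightarrow> bool" where
  "idx_sim F A x G B y a b \<longleftrightarrow>
     {cdf_at F A x (a - 1)<..<cdf_at F A x a} \<inter> {cdf_at G B y (b - 1)<..<cdf_at G B y b} \<noteq> {}"

definition wedge_disc_le ::
  "real pmf \<Rightarrow> int set \<Rightarrow> (int \<Rightarrow> real) \<Rightarrow> (int \<Rightarrow> real) \<Rightarrow>
   real pmf \<Rightarrow> int set \<Rightarrow> (int \<Rightarrow> real) \<Rightarrow> (int \<Rightarrow> real) \<Rightarrow> bool" where
  "wedge_disc_le F A x p G B y q \<longleftrightarrow>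
     (\<forall>a\<in>A. \<forall>b\<in>B. idx_sim F A x G B y a b \<longrightarrow> q b \<le> p a) \<and>
     (\<forall>a\<in>circ A. \<forall>b\<in>circ B.
        idx_sim F A x G B y a b \<and> idx_sim F A x G B y (a - 1) (b - 1) \<longrightarrow>
        x a - x (a - 1) \<le> y b - y (b - 1))"

end

theory Submission
  imports Defs
begin


locale twod =
  fixes A B :: "int set" and s t x y :: "int \<Rightarrow> real"
  assumes intA: "\<And>i j k. i \<in> A \<Longrightarrow> k \<in> A \<Longrightarrow> i \<le> j \<Longrightarrow> j \<le> k \<Longrightarrow> j \<in> A"
    and intB: "\<And>i j k. i \<in> B \<Longrightarrow> k \<in> B \<Longrightarrow> i \<le> j \<Longrightarrow> j \<le> k \<Longrightarrow> j \<in> B"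
    and s_mono: "\<And>a b. a \<le> b \<Longrightarrow> s a \<le> s b"
    and t_mono: "\<And>a b. a \<le> b \<Longrightarrow> t a \<le> t b"
    and s_nn: "\<And>a. 0 \<le> s a" and t_nn: "\<And>a. 0 \<le> t a"
    and t_le1: "\<And>a. t a \<le> 1"
    and s_inc: "\<And>a. a \<in> A \<Longrightarrow> s (a-1) < s a"
    and t_inc: "\<And>a. a \<in> B \<Longrightarrow> t (a-1) < t a"
    and s_below: "\<And>a. a \<in> A \<Longrightarrow> a - 1 \<notin> A \<Longrightarrow> s (a-1) = 0"
    and s_above: "\<And>a. a \<in> A \<Longrightarrow> a + 1 \<notin> A \<Longrightarrow> s a = 1"
    and s_exists: "\<And>u. 0 < u \<Longrightarrow> u < 1 \<Longrightarrow> \<exists>a\<in>A. s (a-1) < u \<and> u \<le> s a"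
    and xmono: "strict_mono_on A x" and ymono: "strict_mono_on B y"
    and cond1: "\<And>a b. a \<in> A \<Longrightarrow> b \<in> B \<Longrightarrow> s (a-1) < t b \<Longrightarrow> t (b-1) < s a
                  \<Longrightarrow> t b - t (b-1) \<le> s a - s (a-1)"
    and cond2: "\<And>a b. a \<in> A \<Longrightarrow> a - 1 \<in> A \<Longrightarrow> b \<in> B \<Longrightarrow> b - 1 \<in> B
                  \<Longrightarrow> s (a-1) < t b \<Longrightarrow> t (b-1) < s a
                  \<Longrightarrow> s (a-2) < t (b-1) \<Longrightarrow> t (b-2) < s (a-1)
                  \<Longrightarrow> x a - x (a-1) \<le> y b - y (b-1)"
begin

lemma s_lt_imp: "s a < s b \<Longrightarrow> a < b"
  using s_mono[of b a] by (cases "a < b") auto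

lemma ymono_le: "b \<in> B \<Longrightarrow> b' \<in> B \<Longrightarrow> b \<le> b' \<Longrightarrow> y b \<le> y b'"
  using ymono by (metis order_le_less strict_mono_onD)

lemma lemM:
  assumes a: "a \<in> A" and b: "b \<in> B" and sab: "s (a-1) < t b" "t (b-1) < s a"
    and st: "s (a-1) \<le> t (b-1)"
  shows "\<forall>a' b'. b' = b + int n \<longrightarrow> a' \<in> A \<longrightarrow> b' \<in> B \<longrightarrow> s (a'-1) < t b' \<longrightarrow> t (b'-1) < s a'
     \<longrightarrow> s (a'-1) \<le> t (b'-1) \<longrightarrow> x a' - x a \<le> y b' - y b"
proof (induction n)
  case 0
  show ?case
  proof (intro allI impI)
    fix a' b' assume h: "b' = b + int 0" "a' \<in> A" "b' \<in> B" "s (a'-1) < t b'" "t (b'-1) < s a'"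
      "s (a'-1) \<le> t (b'-1)"
    have "a' = a"
    proof (rule ccontr)
      assume "a' \<noteq> a"
      then consider "a < a'" | "a' < a" by linarith
      then show False
      proof cases
        case 1 then have "s a \<le> s (a'-1)" by (intro s_mono) auto
        then show False using h sab by auto
      next
        case 2 then have "s a' \<le> s (a-1)" by (intro s_mono) auto
        then show False using h sab st by auto
      qed
    qed
    then show "x a' - x a \<le> y b' - y b" using h by simp
  qed
next
  case (Suc n)
  show ?case
  proof (intro allI impI)
    fix a' b' assume h: "b' = b + int (Suc n)" "a' \<in> A" "b' \<in> B" "s (a'-1) < t b'" "t (b'-1) < s a'"
      "s (a'-1) \<le> t (b'-1)"
    have b1: "b' - 1 \<in> B" using intB[OF b h(3), of "b'-1"] h(1) by auto
    have bb: "b' - 1 = b + int n" using h(1) by simp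
    show "x a' - x a \<le> y b' - y b"
    proof (cases "s (a'-1) \<le> t (b'-1-1)")
      case True
      have "t (b'-1-1) < t (b'-1)" using t_inc[OF b1] .
      then have "x a' - x a \<le> y (b'-1) - y b"
        using Suc.IH h True b1 bb t_inc[OF b1] t_mono[of "b'-1" b'] by force
      moreover have "y (b'-1) \<le> y b'" using ymono_le[OF b1 h(3)] by simp
      ultimately show ?thesis by simp
    next
      case False
      have a1: "a' - 1 \<in> A"
      proof (rule ccontr)
        assume "a' - 1 \<notin> A"
        then have "s (a'-1) = 0" using s_below h(2) by auto
        then show False using False t_nn[of "b'-1-1"] by simp
      qed
      have si: "s (a'-1-1) < s (a'-1)" using s_inc[OF a1] .
      have c1: "t (b'-1) - t (b'-1-1) \<le> s (a'-1) - s (a'-1-1)"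
        using cond1[OF a1 b1] si h(6) False by simp
      have "x (a'-1) - x a \<le> y (b'-1) - y b"
        using Suc.IH bb a1 b1 si h(6) False c1 by force
      moreover have "x a' - x (a'-1) \<le> y b' - y (b'-1)"
        using cond2[OF h(2) a1 h(3) b1] h si False
        by (smt (verit) diff_diff_eq one_add_one)
      ultimately show ?thesis by simp
    qed
  qed
qed

lemma lemM':
  assumes a': "a' \<in> A" and b': "b' \<in> B" and sab: "s (a'-1) < t b'" "t (b'-1) < s a'"
    and st: "t b' \<le> s a'"
  shows "\<forall>a b. b' = b + int n \<longrightarrow> a \<in> A \<longrightarrow> b \<in> B \<longrightarrow> s (a-1) < t b \<longrightarrow> t (b-1) < s a
     \<longrightarrow> t b \<le> s a \<longrightarrow> x a' - x a \<le> y b' - y b"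
proof (induction n)
  case 0
  show ?case
  proof (intro allI impI)
    fix a b assume h: "b' = b + int 0" "a \<in> A" "b \<in> B" "s (a-1) < t b" "t (b-1) < s a"
      "t b \<le> s a"
    have "a' = a"
    proof (rule ccontr)
      assume "a' \<noteq> a"
      then consider "a < a'" | "a' < a" by linarith
      then show False
      proof cases
        case 1 then have "s a \<le> s (a'-1)" by (intro s_mono) auto
        then show False using h sab by auto
      next
        case 2 then have "s a' \<le> s (a-1)" by (intro s_mono) auto
        then show False using h sab st by auto
      qed
    qed
    then show "x a' - x a \<le> y b' - y b" using h by simp
  qed
next
  case (Suc n)
  show ?case
  proof (intro allI impI)
    fix a b assume h: "b' = b + int (Suc n)" "a \<in> A" "b \<in> B" "s (a-1) < t b" "t (b-1) < s a"
      "t b \<le> s a"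
    have b1: "b + 1 \<in> B" using intB[OF h(3) b', of "b+1"] h(1) by auto
    have bb: "b' = (b + 1) + int n" using h(1) by simp
    have ti: "t b < t (b+1)" using t_inc[OF b1] by simp
    show "x a' - x a \<le> y b' - y b"
    proof (cases "t (b+1) \<le> s a")
      case True
      have "x a' - x a \<le> y b' - y (b+1)"
        using Suc.IH h True b1 bb ti t_mono[of b "b+1"] by force
      moreover have "y b \<le> y (b+1)" using ymono_le[OF h(3) b1] by simp
      ultimately show ?thesis by simp
    next
      case False
      have a1: "a + 1 \<in> A"
      proof (rule ccontr)
        assume "a + 1 \<notin> A"
        then have "s a = 1" using s_above h(2) by auto
        then show False using False t_le1[of "b+1"] by simp
      qed
      have si: "s a < s (a+1)" using s_inc[OF a1] by simp
      have c1: "t (b+1) - t b \<le> s (a+1) - s a"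
        using cond1[OF a1 b1] si h False by simp
      have "t (b+1) \<le> s (a+1)" using c1 h by simp
      then have "x a' - x (a+1) \<le> y b' - y (b+1)"
        using spec[OF spec[OF Suc.IH, of "a+1"], of "b+1"] bb a1 b1 si h False by (simp add: add.assoc)
      moreover have "x (a+1) - x a \<le> y (b+1) - y b"
        using cond2[OF a1 _ b1, simplified] h si False by simp
      ultimately show ?thesis by simp
    qed
  qed
qed

lemma alpha: assumes b: "b \<in> B" shows "\<exists>a\<in>A. s (a-1) < t b \<and> t b \<le> s a"
proof -
  define m where "m = (t (b-1) + t b) / 2"
  have tb: "t (b-1) < t b" using t_inc[OF b] .
  have m: "t (b-1) < m" "m < t b" using tb unfolding m_def by auto
  have "0 < m" "m < 1" using m t_nn[of "b-1"] t_le1[of b] by auto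
  then obtain a0 where a0: "a0 \<in> A" "s (a0-1) < m" "m \<le> s a0" using s_exists by blast
  show ?thesis
  proof (cases "t b \<le> s a0")
    case True then show ?thesis using a0 m by force
  next
    case False
    have a1: "a0 + 1 \<in> A"
    proof (rule ccontr)
      assume "a0 + 1 \<notin> A"
      then have "s a0 = 1" using s_above a0 by auto
      then show False using False t_le1[of b] by simp
    qed
    have si: "s a0 < s (a0+1)" using s_inc[OF a1] by simp
    have "t b - t (b-1) \<le> s (a0+1) - s a0"
      using cond1[OF a1 b] si False m a0 by simp
    then have "t b \<le> s (a0+1)" using m a0 by simp
    then show ?thesis using a1 False by (intro bexI[of _ "a0+1"]) auto
  qed
qed

lemma beta: assumes b: "b \<in> B" shows "\<exists>a\<in>A. s (a-1) \<le> t (b-1) \<and> t (b-1) < s a"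
proof -
  obtain a where a: "a \<in> A" "s (a-1) < t b" "t b \<le> s a" using alpha[OF b] by blast
  have tb: "t (b-1) < t b" using t_inc[OF b] .
  show ?thesis
  proof (cases "s (a-1) \<le> t (b-1)")
    case True then show ?thesis using a tb by force
  next
    case False
    have a1: "a - 1 \<in> A"
    proof (rule ccontr)
      assume "a - 1 \<notin> A"
      then have "s (a-1) = 0" using s_below a by auto
      then show False using False t_nn[of "b-1"] by simp
    qed
    have si: "s (a-1-1) < s (a-1)" using s_inc[OF a1] .
    have "t b - t (b-1) \<le> s (a-1) - s (a-1-1)"
      using cond1[OF a1 b] si False a by simp
    then have "s (a-1-1) \<le> t (b-1)" using a by simp
    then show ?thesis using a1 False by (intro bexI[of _ "a-1"]) auto
  qed
qed

theorem core:
  assumes b1: "b1 \<in> B" and b2: "b2 \<in> B" and le: "b1 \<le> b2"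
  shows "\<exists>a\<in>A. \<exists>a'\<in>A. a \<le> a' \<and> x a' - x a \<le> y b2 - y b1 \<and> t b2 - t (b1-1) \<le> s a' - s (a-1)"
proof (cases "\<exists>bm. b1 \<le> bm \<and> bm \<le> b2 \<and> (\<exists>am\<in>A. s (am-1) \<le> t (bm-1) \<and> t bm \<le> s am)")
  case True
  then obtain bm am where bm: "b1 \<le> bm" "bm \<le> b2" and am: "am \<in> A" "s (am-1) \<le> t (bm-1)" "t bm \<le> s am"
    by blast
  have bmB: "bm \<in> B" using intB[OF b1 b2] bm by blast
  have tbm: "t (bm-1) < t bm" using t_inc[OF bmB] .
  obtain aL where aL: "aL \<in> A" "s (aL-1) \<le> t (b1-1)" "t (b1-1) < s aL" using beta[OF b1] by blast
  obtain aR where aR: "aR \<in> A" "s (aR-1) < t b2" "t b2 \<le> s aR" using alpha[OF b2] by blast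
  have tb1: "t (b1-1) < t b1" using t_inc[OF b1] .
  have tb2: "t (b2-1) < t b2" using t_inc[OF b2] .
  have "x am - x aL \<le> y bm - y b1"
    using lemM[OF aL(1) b1 _ aL(3) aL(2), of "nat (bm - b1)"] aL tb1 am bm bmB tbm by force
  moreover have "x aR - x am \<le> y b2 - y bm"
    using lemM'[OF aR(1) b2 aR(2) _ aR(3), of "nat (b2 - bm)"] aR tb2 am bm bmB tbm by force
  moreover have "aL \<le> aR"
  proof -
    have "s (aL - 1) < s aR" using aL aR t_mono[of b1 b2] tb1 le by linarith
    then show ?thesis using s_lt_imp by force
  qed
  moreover have "t b2 - t (b1-1) \<le> s aR - s (aL-1)" using aL aR by simp
  ultimately show ?thesis using aL aR by (intro bexI[of _ aL] bexI[of _ aR]) auto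
next
  case False
  define al where "al b = (SOME a. a \<in> A \<and> s (a-1) < t b \<and> t b \<le> s a)" for b
  have al: "al b \<in> A \<and> s (al b - 1) < t b \<and> t b \<le> s (al b)" if "b \<in> B" for b
    unfolding al_def using someI_ex[OF alpha[OF that, unfolded Bex_def]] .
  have inB: "b \<in> B" if "b1 \<le> b" "b \<le> b2" for b using intB[OF b1 b2] that by blast
  have nc: "t (b-1) < s (al b - 1)" if "b1 \<le> b" "b \<le> b2" for b
    using False al[OF inB[OF that]] that by force
  have big: "t b + (s (al b - 1) - t (b-1)) \<le> s (al b)" if "b1 \<le> b" "b \<le> b2" for b
  proof -
    have bB: "b \<in> B" using inB[OF that] .
    have "t b - t (b-1) \<le> s (al b) - s (al b - 1)"
      using cond1[of "al b" b] al[OF bB] bB t_inc[OF bB] by force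
    then show ?thesis by simp
  qed
  have mono_u: "b1 + int n \<le> b2 \<longrightarrow> s (al b1 - 1) - t (b1-1) \<le> s (al (b1 + int n) - 1) - t (b1 + int n - 1)" for n
  proof (induction n)
    case 0 then show ?case by simp
  next
    case (Suc n)
    show ?case
    proof
      assume h: "b1 + int (Suc n) \<le> b2"
      define b where "b = b1 + int n"
      have hb: "b1 \<le> b" "b + 1 \<le> b2" using h b_def by auto
      have bB: "b \<in> B" and b1B: "b + 1 \<in> B" using inB hb by auto
      have "t b < s (al (b+1) - 1)" using nc[of "b+1"] hb by simp
      moreover have "s (al b - 1) < t b" using al[OF bB] by simp
      ultimately have "al b - 1 < al (b+1) - 1" using s_lt_imp by force
      then have "s (al b) \<le> s (al (b+1) - 1)" using s_mono by simp
      moreover have "t b + (s (al b - 1) - t (b-1)) \<le> s (al b)" using big hb by simp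
      moreover have "s (al b1 - 1) - t (b1-1) \<le> s (al b - 1) - t (b-1)" using Suc.IH h b_def by simp
      moreover have eq: "b1 + int (Suc n) = b + 1" by (simp add: b_def)
      ultimately show "s (al b1 - 1) - t (b1-1) \<le> s (al (b1 + int (Suc n)) - 1) - t (b1 + int (Suc n) - 1)"
        unfolding eq by simp
    qed
  qed
  have u: "s (al b1 - 1) - t (b1-1) \<le> s (al b2 - 1) - t (b2 - 1)"
    using mono_u[of "nat (b2 - b1)"] le by simp
  have A1: "al b1 \<in> A" "s (al b1 - 1) < t b1" "t b1 \<le> s (al b1)" using al[OF b1] by auto
  have A2: "al b2 \<in> A" "s (al b2 - 1) < t b2" "t b2 \<le> s (al b2)" using al[OF b2] by auto
  have tb1: "t (b1-1) < t b1" using t_inc[OF b1] .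
  have tb2: "t (b2-1) < t b2" using t_inc[OF b2] .
  have "x (al b2) - x (al b1) \<le> y b2 - y b1"
    using lemM'[OF A2(1) b2 A2(2) _ A2(3), of "nat (b2 - b1)"] A1 A2 tb1 tb2 le b1 by force
  moreover have "al b1 \<le> al b2"
  proof -
    have "s (al b1 - 1) < s (al b2)" using A1 A2 t_mono[of b1 b2] le by linarith
    then show ?thesis using s_lt_imp by force
  qed
  moreover have "t b2 - t (b1-1) \<le> s (al b2) - s (al b1 - 1)"
    using big[of b2] le u by simp
  ultimately show ?thesis using A1 A2 by (intro bexI[of _ "al b1"] bexI[of _ "al b2"]) auto
qed

end


context
  fixes F :: "real pmf" and A :: "int set" and x p :: "int \<Rightarrow> real"
  assumes R: "represents F A x p"
begin

lemma rep_adm: "admissible_index A" using R unfolding represents_def by blast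

lemma rep_int: "i \<in> A \<Longrightarrow> k \<in> A \<Longrightarrow> i \<le> j \<Longrightarrow> j \<le> k \<Longrightarrow> j \<in> A"
  using rep_adm unfolding admissible_index_def by auto

lemma rep_sm: "strict_mono_on A x" using R unfolding represents_def by blast
lemma rep_set: "set_pmf F = x ` A" using R unfolding represents_def by blast
lemma rep_pmf: "j \<in> A \<Longrightarrow> pmf F (x j) = p j" using R unfolding represents_def by blast
lemma rep_pos: "j \<in> A \<Longrightarrow> p j > 0" using R unfolding represents_def by blast
lemma rep_sum: "(p has_sum 1) A" using R unfolding represents_def by blast

lemma rep_le_iff: "i \<in> A \<Longrightarrow> j \<in> A \<Longrightarrow> x i \<le> x j \<longleftrightarrow> i \<le> j"
  using strict_mono_onD[OF rep_sm, of i j] strict_mono_onD[OF rep_sm, of j i]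
  by (cases i j rule: linorder_cases) auto

lemma rep_inj: "inj_on x A" using rep_sm strict_mono_on_imp_inj_on by blast

lemma cdf_S: "cdf_at F A x a = measure_pmf.prob F (x ` {j\<in>A. j \<le> a})"
proof (cases "a \<in> A")
  case True
  have "{..x a} \<inter> set_pmf F = x ` {j\<in>A. j \<le> a}"
  proof (intro set_eqI iffI)
    fix z assume "z \<in> {..x a} \<inter> set_pmf F"
    then obtain j where "j \<in> A" "z = x j" "x j \<le> x a" using rep_set by auto
    then show "z \<in> x ` {j\<in>A. j \<le> a}" using rep_le_iff[of j a] True by auto
  next
    fix z assume "z \<in> x ` {j\<in>A. j \<le> a}"
    then obtain j where "j \<in> A" "z = x j" "j \<le> a" by auto
    then show "z \<in> {..x a} \<inter> set_pmf F" using rep_le_iff[of j a] True rep_set by auto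
  qed
  then show ?thesis using True measure_Int_set_pmf[of F "{..x a}"] unfolding cdf_at_def by simp
next
  case False
  show ?thesis
  proof (cases "\<forall>i\<in>A. a < i")
    case True
    then have e: "{j\<in>A. j \<le> a} = {}" by auto
    show ?thesis unfolding cdf_at_def e using True False by simp
  next
    case F2: False
    then obtain i where i: "i \<in> A" "i \<le> a" by auto
    have "\<forall>k\<in>A. k \<le> a"
    proof
      fix k assume k: "k \<in> A"
      show "k \<le> a"
      proof (rule ccontr)
        assume "\<not> k \<le> a"
        then have "a \<in> A" using rep_int[of i k a] i k by auto
        then show False using False by simp
      qed
    qed
    then have "{j\<in>A. j \<le> a} = A" by auto
    moreover have "measure_pmf.prob F (set_pmf F) = 1"
      using measure_Int_set_pmf[of F UNIV] by simp
    ultimately show ?thesis using False F2 rep_set unfolding cdf_at_def by simp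
  qed
qed

lemma cdf_win: assumes "a \<le> a'"
  shows "measure_pmf.prob F (x ` {j\<in>A. a \<le> j \<and> j \<le> a'}) = cdf_at F A x a' - cdf_at F A x (a-1)"
proof -
  have "{j\<in>A. j \<le> a'} = {j\<in>A. j \<le> a-1} \<union> {j\<in>A. a \<le> j \<and> j \<le> a'}" using assms by auto
  then have e: "x ` {j\<in>A. j \<le> a'} = x ` {j\<in>A. j \<le> a-1} \<union> x ` {j\<in>A. a \<le> j \<and> j \<le> a'}" by auto
  have d: "x ` {j\<in>A. j \<le> a-1} \<inter> x ` {j\<in>A. a \<le> j \<and> j \<le> a'} = {}"
    using inj_on_image_Int[OF rep_inj, of "{j\<in>A. j \<le> a-1}" "{j\<in>A. a \<le> j \<and> j \<le> a'}"] by auto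
  show ?thesis unfolding cdf_S e using measure_pmf.finite_measure_Union[OF _ _ d] by simp
qed

lemma cdf_mono: "a \<le> b \<Longrightarrow> cdf_at F A x a \<le> cdf_at F A x b"
  unfolding cdf_S by (intro measure_pmf.finite_measure_mono) auto

lemma cdf_nn: "0 \<le> cdf_at F A x a" unfolding cdf_S by simp
lemma cdf_le1: "cdf_at F A x a \<le> 1" unfolding cdf_S by simp

lemma cdf_jump: "a \<in> A \<Longrightarrow> cdf_at F A x a - cdf_at F A x (a-1) = p a"
proof -
  assume a: "a \<in> A"
  have "{j\<in>A. a \<le> j \<and> j \<le> a} = {a}" using a by auto
  then show ?thesis using cdf_win[of a a] rep_pmf[OF a] measure_pmf_single[of F "x a"] by simp
qed

lemma cdf_inc: "a \<in> A \<Longrightarrow> cdf_at F A x (a-1) < cdf_at F A x a"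
proof -
  assume a: "a \<in> A"
  show ?thesis using cdf_jump[OF a] rep_pos[OF a] by linarith
qed

lemma cdf_below: "a \<in> A \<Longrightarrow> a - 1 \<notin> A \<Longrightarrow> cdf_at F A x (a-1) = 0"
proof -
  assume a: "a \<in> A" "a - 1 \<notin> A"
  have "\<forall>i\<in>A. a - 1 < i"
  proof
    fix i assume "i \<in> A"
    then show "a - 1 < i" using rep_int[of i a "a-1"] a by force
  qed
  then show ?thesis using a unfolding cdf_at_def by simp
qed

lemma cdf_above: "a \<in> A \<Longrightarrow> a + 1 \<notin> A \<Longrightarrow> cdf_at F A x a = 1"
proof -
  assume a: "a \<in> A" "a + 1 \<notin> A"
  have "\<forall>k\<in>A. k \<le> a"
  proof
    fix k assume k: "k \<in> A"
    show "k \<le> a"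
    proof (rule ccontr)
      assume "\<not> k \<le> a"
      then show False using rep_int[of a k "a+1"] a k by auto
    qed
  qed
  then have "{j\<in>A. j \<le> a} = A" by auto
  moreover have "measure_pmf.prob F (set_pmf F) = 1"
    using measure_Int_set_pmf[of F UNIV] by simp
  ultimately show ?thesis unfolding cdf_S using rep_set by simp
qed

lemma prob_fin: "finite K \<Longrightarrow> K \<subseteq> A \<Longrightarrow> measure_pmf.prob F (x ` K) = sum p K"
proof -
  assume K: "finite K" "K \<subseteq> A"
  have "measure_pmf.prob F (x ` K) = sum (pmf F) (x ` K)"
    using K by (simp add: measure_measure_pmf_finite)
  also have "\<dots> = sum (pmf F \<circ> x) K"
    using K rep_inj by (intro sum.reindex) (auto intro: inj_on_subset)
  also have "\<dots> = sum p K" using K rep_pmf by (intro sum.cong) auto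
  finally show ?thesis .
qed

lemma fin_big: "u < 1 \<Longrightarrow> \<exists>K. finite K \<and> K \<subseteq> A \<and> u < sum p K"
proof -
  assume u: "u < 1"
  have "(sum p \<longlongrightarrow> 1) (finite_subsets_at_top A)" using rep_sum unfolding has_sum_def .
  then have "eventually (\<lambda>K. u < sum p K) (finite_subsets_at_top A)"
    using order_tendstoD(1) u by blast
  then show ?thesis unfolding eventually_finite_subsets_at_top by blast
qed

lemma cdf_exists: assumes u: "0 < u" "u < 1"
  shows "\<exists>a\<in>A. cdf_at F A x (a-1) < u \<and> u \<le> cdf_at F A x a"
proof -
  let ?s = "cdf_at F A x"
  obtain K where K: "finite K" "K \<subseteq> A" "u < sum p K" using fin_big u by blast
  have "K \<noteq> {}" using K u by auto
  define a1 where "a1 = Max K"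
  have a1: "a1 \<in> A" using K Max_in[OF K(1) \<open>K \<noteq> {}\<close>] a1_def by auto
  have "K \<subseteq> {j\<in>A. j \<le> a1}" using K a1_def by auto
  then have "measure_pmf.prob F (x ` K) \<le> ?s a1"
    unfolding cdf_S by (intro measure_pmf.finite_measure_mono) auto
  then have s1: "u < ?s a1" using prob_fin K by simp
  obtain K' where K': "finite K'" "K' \<subseteq> A" "1 - u < sum p K'" using fin_big[of "1-u"] u by auto
  have "K' \<noteq> {}" using K' u by auto
  define a0 where "a0 = Min K' - 1"
  have d: "x ` {j\<in>A. j \<le> a0} \<inter> x ` K' = {}"
  proof -
    have "\<And>j k. j \<in> A \<Longrightarrow> j \<le> a0 \<Longrightarrow> k \<in> K' \<Longrightarrow> x j \<noteq> x k"
    proof -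
      fix j k assume h: "j \<in> A" "j \<le> a0" "k \<in> K'"
      have "Min K' \<le> k" using Min_le K' h by auto
      then have "j < k" using h a0_def by linarith
      then show "x j \<noteq> x k" using h K' strict_mono_onD[OF rep_sm, of j k] by auto
    qed
    then show ?thesis by blast
  qed
  have "?s a0 + measure_pmf.prob F (x ` K') \<le> 1"
    unfolding cdf_S using measure_pmf.finite_measure_Union[OF _ _ d, symmetric] by simp
  then have s0: "?s a0 < u" using prob_fin K' by simp
  have "\<not> a1 \<le> a0" using s0 s1 cdf_mono[of a1 a0] by linarith
  then have "a0 < a1" by simp
  define P where "P n = (u \<le> ?s (a0 + int n))" for n
  have Pn: "P (nat (a1 - a0))" unfolding P_def using s1 \<open>a0 < a1\<close> by simp
  define n where "n = (LEAST n. P n)"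
  have Pn': "P n" unfolding n_def using Pn by (rule LeastI)
  have nle: "n \<le> nat (a1 - a0)" unfolding n_def using Pn by (rule Least_le)
  have n0: "n \<noteq> 0"
  proof
    assume "n = 0"
    then show False using Pn' s0 unfolding P_def by simp
  qed
  have "n - 1 < n" using n0 by simp
  then have "\<not> P (n - 1)" unfolding n_def by (rule not_less_Least)
  then have lt: "?s (a0 + int n - 1) < u" unfolding P_def using n0 by (simp add: of_nat_diff algebra_simps)
  define a where "a = a0 + int n"
  have aA: "a \<in> A"
  proof (rule ccontr)
    assume na: "a \<notin> A"
    show False
    proof (cases "\<forall>i\<in>A. a < i")
      case True
      then have "?s a = 0" using na unfolding cdf_at_def by simp
      then show False using Pn' u unfolding P_def a_def by simp
    next
      case False
      then obtain i where "i \<in> A" "\<not> a < i" by blast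
      then have "i \<in> A" "i \<le> a" by auto
      moreover have "a \<le> a1" using nle a_def \<open>a0 < a1\<close> by simp
      ultimately show False using rep_int[of i a1 a] a1 na by simp
    qed
  qed
  show ?thesis using aA lt Pn' unfolding a_def P_def by (intro bexI[of _ "a0 + int n"]) auto
qed

end


lemma ivl_meet: "(l1::real) < r1 \<Longrightarrow> l2 < r2 \<Longrightarrow> l1 < r2 \<Longrightarrow> l2 < r1 \<Longrightarrow> {l1<..<r1} \<inter> {l2<..<r2} \<noteq> {}"
proof -
  assume h: "l1 < r1" "l2 < r2" "l1 < r2" "l2 < r1"
  define z where "z = (max l1 l2 + min r1 r2) / 2"
  have "z \<in> {l1<..<r1} \<inter> {l2<..<r2}" using h unfolding z_def by auto
  then show ?thesis by blast
qed

lemma circI: "a \<in> A \<Longrightarrow> a - 1 \<in> A \<Longrightarrow> a \<in> circ A"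
  unfolding circ_def by force

theorem theorem4p1:
  fixes F G :: "real pmf" and A B :: "int set" and x p y q :: "int \<Rightarrow> real"
  assumes "represents F A x p"
    and "represents G B y q"
    and "wedge_disc_le F A x p G B y q"
  shows "wd_le F G"
proof -
  note RF = assms(1) and RG = assms(2) and W = assms(3)
  let ?s = "cdf_at F A x" and ?t = "cdf_at G B y"
  have sim: "idx_sim F A x G B y a b" if "a \<in> A" "b \<in> B" "?s (a-1) < ?t b" "?t (b-1) < ?s a" for a b
    unfolding idx_sim_def using ivl_meet cdf_inc[OF RF that(1)] cdf_inc[OF RG that(2)] that by blast
  interpret twod A B ?s ?t x y
  proof
    show "\<And>i j k. i \<in> A \<Longrightarrow> k \<in> A \<Longrightarrow> i \<le> j \<Longrightarrow> j \<le> k \<Longrightarrow> j \<in> A" using rep_int[OF RF] by blast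
    show "\<And>i j k. i \<in> B \<Longrightarrow> k \<in> B \<Longrightarrow> i \<le> j \<Longrightarrow> j \<le> k \<Longrightarrow> j \<in> B" using rep_int[OF RG] by blast
    show "\<And>a b. a \<le> b \<Longrightarrow> ?s a \<le> ?s b" using cdf_mono[OF RF] by blast
    show "\<And>a b. a \<le> b \<Longrightarrow> ?t a \<le> ?t b" using cdf_mono[OF RG] by blast
    show "\<And>a. 0 \<le> ?s a" using cdf_nn[OF RF] by blast
    show "\<And>a. 0 \<le> ?t a" using cdf_nn[OF RG] by blast
    show "\<And>a. ?t a \<le> 1" using cdf_le1[OF RG] by blast
    show "\<And>a. a \<in> A \<Longrightarrow> ?s (a-1) < ?s a" using cdf_inc[OF RF] by blast
    show "\<And>a. a \<in> B \<Longrightarrow> ?t (a-1) < ?t a" using cdf_inc[OF RG] by blast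
    show "\<And>a. a \<in> A \<Longrightarrow> a - 1 \<notin> A \<Longrightarrow> ?s (a-1) = 0" using cdf_below[OF RF] by blast
    show "\<And>a. a \<in> A \<Longrightarrow> a + 1 \<notin> A \<Longrightarrow> ?s a = 1" using cdf_above[OF RF] by blast
    show "\<And>u. 0 < u \<Longrightarrow> u < 1 \<Longrightarrow> \<exists>a\<in>A. ?s (a-1) < u \<and> u \<le> ?s a" using cdf_exists[OF RF] by blast
    show "strict_mono_on A x" using rep_sm[OF RF] .
    show "strict_mono_on B y" using rep_sm[OF RG] .
    show "\<And>a b. a \<in> A \<Longrightarrow> b \<in> B \<Longrightarrow> ?s (a-1) < ?t b \<Longrightarrow> ?t (b-1) < ?s a
                  \<Longrightarrow> ?t b - ?t (b-1) \<le> ?s a - ?s (a-1)"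
    proof -
      fix a b assume h: "a \<in> A" "b \<in> B" "?s (a-1) < ?t b" "?t (b-1) < ?s a"
      have "q b \<le> p a" using W sim[OF h] h unfolding wedge_disc_le_def by blast
      then show "?t b - ?t (b-1) \<le> ?s a - ?s (a-1)" using cdf_jump[OF RF h(1)] cdf_jump[OF RG h(2)] by simp
    qed
    show "\<And>a b. a \<in> A \<Longrightarrow> a - 1 \<in> A \<Longrightarrow> b \<in> B \<Longrightarrow> b - 1 \<in> B
                  \<Longrightarrow> ?s (a-1) < ?t b \<Longrightarrow> ?t (b-1) < ?s a
                  \<Longrightarrow> ?s (a-2) < ?t (b-1) \<Longrightarrow> ?t (b-2) < ?s (a-1)
                  \<Longrightarrow> x a - x (a-1) \<le> y b - y (b-1)"
    proof -
      fix a b assume h: "a \<in> A" "a - 1 \<in> A" "b \<in> B" "b - 1 \<in> B" "?s (a-1) < ?t b" "?t (b-1) < ?s a"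
        "?s (a-2) < ?t (b-1)" "?t (b-2) < ?s (a-1)"
      have s1: "idx_sim F A x G B y a b" using sim h by blast
      have s2: "idx_sim F A x G B y (a-1) (b-1)" using sim[OF h(2) h(4)] h by simp
      show "x a - x (a-1) \<le> y b - y (b-1)"
        using W circI[OF h(1) h(2)] circI[OF h(3) h(4)] s1 s2 unfolding wedge_disc_le_def by blast
    qed
  qed
  show ?thesis unfolding wd_le_def
  proof (intro allI impI)
    fix eps :: real assume eps: "eps > 0"
    have bdd: "bdd_above (range (\<lambda>x0. measure_pmf.prob F {x0..x0+eps}))"
      by (intro bdd_aboveI[of _ 1]) auto
    have cF: "measure_pmf.prob F {z..z+eps} \<le> conc F eps" for z
      unfolding conc_def by (rule cSUP_upper[OF _ bdd]) simp
    have c0: "0 \<le> conc F eps" using cF[of 0] measure_nonneg[of "measure_pmf F" "{0..0+eps}"] by linarith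
    have key: "measure_pmf.prob G {x0..x0+eps} \<le> conc F eps" for x0
    proof (rule ccontr)
      let ?W = "{x0..x0+eps}"
      assume "\<not> ?thesis"
      then have gt: "conc F eps < measure_pmf.prob G ?W" by simp
      define K where "K n = {b\<in>B. y b \<in> ?W \<and> - int n \<le> b \<and> b \<le> int n}" for n
      define C where "C n = y ` K n" for n
      have inc: "incseq C" unfolding incseq_def C_def K_def by force
      have un: "(\<Union>n. C n) = ?W \<inter> set_pmf G"
      proof (intro set_eqI iffI)
        fix z assume "z \<in> (\<Union>n. C n)"
        then show "z \<in> ?W \<inter> set_pmf G" unfolding C_def K_def rep_set[OF RG] by auto
      next
        fix z assume "z \<in> ?W \<inter> set_pmf G"
        then obtain b where b: "b \<in> B" "z = y b" "y b \<in> ?W" unfolding rep_set[OF RG] by auto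
        then have "z \<in> C (nat \<bar>b\<bar>)" unfolding C_def K_def by auto
        then show "z \<in> (\<Union>n. C n)" by blast
      qed
      have "(\<lambda>n. measure_pmf.prob G (C n)) \<longlonglongrightarrow> measure_pmf.prob G (\<Union>n. C n)"
        by (rule measure_pmf.finite_Lim_measure_incseq) (auto simp: inc)
      then have "(\<lambda>n. measure_pmf.prob G (C n)) \<longlonglongrightarrow> measure_pmf.prob G ?W"
        unfolding un measure_Int_set_pmf .
      then have "eventually (\<lambda>n. conc F eps < measure_pmf.prob G (C n)) sequentially"
        using order_tendstoD(1) gt by blast
      then obtain n where n: "conc F eps < measure_pmf.prob G (C n)" by (auto simp: eventually_sequentially)
      have finK: "finite (K n)" unfolding K_def by (rule finite_subset[of _ "{- int n..int n}"]) auto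
      have neK: "K n \<noteq> {}"
      proof
        assume "K n = {}"
        then show False using n c0 unfolding C_def by simp
      qed
      define b1 where "b1 = Min (K n)"
      define b2 where "b2 = Max (K n)"
      have b1K: "b1 \<in> K n" unfolding b1_def using Min_in[OF finK neK] .
      have b2K: "b2 \<in> K n" unfolding b2_def using Max_in[OF finK neK] .
      have b1B: "b1 \<in> B" and b2B: "b2 \<in> B" using b1K b2K unfolding K_def by auto
      have le: "b1 \<le> b2" unfolding b1_def b2_def using finK neK by simp
      have sub: "C n \<subseteq> {y b1..y b2}"
      proof
        fix z assume "z \<in> C n"
        then obtain b where b: "b \<in> K n" "z = y b" unfolding C_def by auto
        have "b1 \<le> b" "b \<le> b2" unfolding b1_def b2_def using b finK by auto
        moreover have "b \<in> B" using b unfolding K_def by auto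
        ultimately show "z \<in> {y b1..y b2}" using ymono_le b1B b2B b by auto
      qed
      have eqG: "{y b1..y b2} \<inter> set_pmf G = y ` {j\<in>B. b1 \<le> j \<and> j \<le> b2}"
      proof (intro set_eqI iffI)
        fix z assume "z \<in> {y b1..y b2} \<inter> set_pmf G"
        then obtain j where j: "j \<in> B" "z = y j" "y b1 \<le> y j" "y j \<le> y b2" unfolding rep_set[OF RG] by auto
        then have "b1 \<le> j" "j \<le> b2" using rep_le_iff[OF RG] b1B b2B by auto
        then show "z \<in> y ` {j\<in>B. b1 \<le> j \<and> j \<le> b2}" using j by auto
      next
        fix z assume "z \<in> y ` {j\<in>B. b1 \<le> j \<and> j \<le> b2}"
        then obtain j where j: "j \<in> B" "z = y j" "b1 \<le> j" "j \<le> b2" by auto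
        then show "z \<in> {y b1..y b2} \<inter> set_pmf G" using ymono_le b1B b2B rep_set[OF RG] by auto
      qed
      have "measure_pmf.prob G (C n) \<le> measure_pmf.prob G {y b1..y b2}"
        using sub by (intro measure_pmf.finite_measure_mono) auto
      also have "\<dots> = ?t b2 - ?t (b1-1)"
        using measure_Int_set_pmf[of G "{y b1..y b2}"] eqG cdf_win[OF RG le] by simp
      finally have g1: "measure_pmf.prob G (C n) \<le> ?t b2 - ?t (b1-1)" .
      obtain a a' where aa: "a \<in> A" "a' \<in> A" "a \<le> a'" "x a' - x a \<le> y b2 - y b1"
        "?t b2 - ?t (b1-1) \<le> ?s a' - ?s (a-1)" using core[OF b1B b2B le] by blast
      have "y b2 - y b1 \<le> eps" using b1K b2K unfolding K_def by auto
      then have "x (a') \<le> x a + eps" using aa by simp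
      then have "x ` {j\<in>A. a \<le> j \<and> j \<le> a'} \<subseteq> {x a..x a + eps}"
        using rep_le_iff[OF RF] aa by force
      then have "measure_pmf.prob F (x ` {j\<in>A. a \<le> j \<and> j \<le> a'}) \<le> measure_pmf.prob F {x a..x a + eps}"
        by (intro measure_pmf.finite_measure_mono) auto
      then have "?s a' - ?s (a-1) \<le> conc F eps" using cdf_win[OF RF aa(3)] cF[of "x a"] by simp
      then show False using n g1 aa by simp
    qed
    show "conc G eps \<le> conc F eps" unfolding conc_def[of G]
      by (rule cSUP_least) (auto intro: key)
  qed
qed

end
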